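(* For a simplicial set $S$, the conjunction of all Kan conditions $\mathrm{Kan}_p[n]$ for $1\le n\le 2$, $0\le p\le n$, is equivalent to the conjunction of all Beck–Chevalley conditions $\mathrm{BC}_{p,q}[n]$ for $n\le 2$ (that is, $\mathrm{BC}_{0,1}[2]$, $\mathrm{BC}_{0,2}[2]$, $\mathrm{BC}_{1,2}[2]$).
   Context: The Kan condition $\mathrm{Kan}_p[n]$ ($n>0$, $0\le p\le n$) on $S$: for any $(n-1)$-simplices $c_0,\dots,c_{p-1},c_{p+1},\dots,c_n$ of $S$ with $d_ic_j=d_{j-1}c_i$ for all $0\le i<j\le n$ with $p\notin\{i,j\}$, there exists an $n$-simplex $x$ with $d_ix=c_i$ for all $i\ne p$. The Beck–Chevalley condition $\mathrm{BC}_{p,q}[n]$ ($n>1$, $0\le p<q\le n$): for any $(n-1)$-simplices $c_p,c_q$ of $S$ with $d_pc_q=d_{q-1}c_p$ there exists an $n$-simplex $x$ with $d_px=c_p$ and $d_qx=c_q$. *)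

theory Defs
  imports Main
begin

definition simplicial_set ::
  "(nat \<Rightarrow> 'a set) \<Rightarrow> (nat \<Rightarrow> nat \<Rightarrow> 'a \<Rightarrow> 'a) \<Rightarrow> (nat \<Rightarrow> nat \<Rightarrow> 'a \<Rightarrow> 'a) \<Rightarrow> bool" where
  "simplicial_set X d s \<longleftrightarrow>
     (\<forall>n i x. 0 < n \<and> i \<le> n \<and> x \<in> X n \<longrightarrow> d n i x \<in> X (n - 1)) \<and>
     (\<forall>n i x. i \<le> n \<and> x \<in> X n \<longrightarrow> s n i x \<in> X (Suc n)) \<and>
     (\<forall>n i j x. 2 \<le> n \<and> i < j \<and> j \<le> n \<and> x \<in> X n \<longrightarrow>
        d (n - 1) i (d n j x) = d (n - 1) (j - 1) (d n i x)) \<and>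
     (\<forall>n i j x. i < j \<and> j \<le> n \<and> x \<in> X n \<longrightarrow>
        d (Suc n) i (s n j x) = s (n - 1) (j - 1) (d n i x)) \<and>
     (\<forall>n j x. j \<le> n \<and> x \<in> X n \<longrightarrow> d (Suc n) j (s n j x) = x) \<and>
     (\<forall>n j x. j \<le> n \<and> x \<in> X n \<longrightarrow> d (Suc n) (Suc j) (s n j x) = x) \<and>
     (\<forall>n i j x. Suc j < i \<and> i \<le> Suc n \<and> x \<in> X n \<longrightarrow>
        d (Suc n) i (s n j x) = s (n - 1) j (d n (i - 1) x)) \<and>
     (\<forall>n i j x. i \<le> j \<and> j \<le> n \<and> x \<in> X n \<longrightarrow>
        s (Suc n) i (s n j x) = s (Suc n) (Suc j) (s n i x))"

definition Kan_cond ::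
  "(nat \<Rightarrow> 'a set) \<Rightarrow> (nat \<Rightarrow> nat \<Rightarrow> 'a \<Rightarrow> 'a) \<Rightarrow> nat \<Rightarrow> nat \<Rightarrow> bool" where
  "Kan_cond X d p n \<longleftrightarrow>
     (\<forall>c :: nat \<Rightarrow> 'a.
        (\<forall>i\<le>n. i \<noteq> p \<longrightarrow> c i \<in> X (n - 1)) \<and>
        (\<forall>i j. i < j \<and> j \<le> n \<and> i \<noteq> p \<and> j \<noteq> p \<longrightarrow>
            d (n - 1) i (c j) = d (n - 1) (j - 1) (c i))
        \<longrightarrow> (\<exists>x \<in> X n. \<forall>i\<le>n. i \<noteq> p \<longrightarrow> d n i x = c i))"

definition BC_cond ::
  "(nat \<Rightarrow> 'a set) \<Rightarrow> (nat \<Rightarrow> nat \<Rightarrow> 'a \<Rightarrow> 'a) \<Rightarrow> nat \<Rightarrow> nat \<Rightarrow> nat \<Rightarrow> bool" where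
  "BC_cond X d p q n \<longleftrightarrow>
     (\<forall>cp \<in> X (n - 1). \<forall>cq \<in> X (n - 1).
        d (n - 1) p cq = d (n - 1) (q - 1) cp \<longrightarrow>
        (\<exists>x \<in> X n. d n p x = cp \<and> d n q x = cq))"

end

theory Submission
  imports Defs
begin

lemma ss_facts:
  assumes "simplicial_set X d s"
  shows "\<And>x. x \<in> X 0 \<Longrightarrow> s 0 0 x \<in> X 1"
    and "\<And>x. x \<in> X 0 \<Longrightarrow> d 1 0 (s 0 0 x) = x"
    and "\<And>x. x \<in> X 0 \<Longrightarrow> d 1 1 (s 0 0 x) = x"
proof -
  fix x assume x: "x \<in> X 0"
  have A: "\<forall>n i x. i \<le> n \<and> x \<in> X n \<longrightarrow> s n i x \<in> X (Suc n)"
    using assms unfolding simplicial_set_def by (elim conjE) assumption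
  have B: "\<forall>n j x. j \<le> n \<and> x \<in> X n \<longrightarrow> d (Suc n) j (s n j x) = x"
    using assms unfolding simplicial_set_def by (elim conjE) assumption
  have C: "\<forall>n j x. j \<le> n \<and> x \<in> X n \<longrightarrow> d (Suc n) (Suc j) (s n j x) = x"
    using assms unfolding simplicial_set_def by (elim conjE) assumption
  show "s 0 0 x \<in> X 1" using A[rule_format, of 0 0 x] x by simp
  show "d 1 0 (s 0 0 x) = x" using B[rule_format, of 0 0 x] x by simp
  show "d 1 1 (s 0 0 x) = x" using C[rule_format, of 0 0 x] x by simp
qed

lemma kan01:
  assumes "simplicial_set X d s" shows "Kan_cond X d 0 1"
  unfolding Kan_cond_def
proof (intro allI impI)
  fix c :: "nat \<Rightarrow> _"
  assume h: "(\<forall>i\<le>1. i \<noteq> 0 \<longrightarrow> c i \<in> X (1 - 1)) \<and>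
        (\<forall>i j. i < j \<and> j \<le> 1 \<and> i \<noteq> 0 \<and> j \<noteq> 0 \<longrightarrow> d (1 - 1) i (c j) = d (1 - 1) (j - 1) (c i))"
  then have c1: "c 1 \<in> X 0" by auto
  have le1: "\<And>i::nat. i \<le> 1 \<Longrightarrow> i \<noteq> 0 \<Longrightarrow> i = 1" by auto
  show "\<exists>x\<in>X 1. \<forall>i\<le>1. i \<noteq> 0 \<longrightarrow> d 1 i x = c i"
    using ss_facts[OF assms] c1 le1 by blast
qed

lemma kan11:
  assumes "simplicial_set X d s" shows "Kan_cond X d 1 1"
  unfolding Kan_cond_def
proof (intro allI impI)
  fix c :: "nat \<Rightarrow> _"
  assume h: "(\<forall>i\<le>1. i \<noteq> 1 \<longrightarrow> c i \<in> X (1 - 1)) \<and>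
        (\<forall>i j. i < j \<and> j \<le> 1 \<and> i \<noteq> 1 \<and> j \<noteq> 1 \<longrightarrow> d (1 - 1) i (c j) = d (1 - 1) (j - 1) (c i))"
  then have c1: "c 0 \<in> X 0" by auto
  have le1: "\<And>i::nat. i \<le> 1 \<Longrightarrow> i \<noteq> 1 \<Longrightarrow> i = 0" by auto
  show "\<exists>x\<in>X 1. \<forall>i\<le>1. i \<noteq> 1 \<longrightarrow> d 1 i x = c i"
    using ss_facts[OF assms] c1 le1 by blast
qed

lemma le2: "(i::nat) \<le> 2 \<longleftrightarrow> i = 0 \<or> i = 1 \<or> i = 2" by auto

lemma kan02: "Kan_cond X d 0 2 \<longleftrightarrow> BC_cond X d 1 2 2"
  unfolding Kan_cond_def BC_cond_def
proof safe
  fix cp cq assume K: "\<forall>c. (\<forall>i\<le>2. i \<noteq> 0 \<longrightarrow> c i \<in> X (2 - 1)) \<and>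
           (\<forall>i j. i < j \<and> j \<le> 2 \<and> i \<noteq> 0 \<and> j \<noteq> 0 \<longrightarrow> d (2 - 1) i (c j) = d (2 - 1) (j - 1) (c i)) \<longrightarrow>
           (\<exists>x\<in>X 2. \<forall>i\<le>2. i \<noteq> 0 \<longrightarrow> d 2 i x = c i)"
    and a: "cp \<in> X (2 - 1)" "cq \<in> X (2 - 1)" "d (2 - 1) 1 cq = d (2 - 1) (2 - 1) cp"
  define c where "c = (\<lambda>i::nat. if i = 1 then cp else cq)"
  have hh: "\<And>i j::nat. i < j \<Longrightarrow> j \<le> 2 \<Longrightarrow> i \<noteq> 0 \<Longrightarrow> j \<noteq> 0 \<Longrightarrow> i = 1 \<and> j = 2" by auto
  have H1: "\<forall>i\<le>2. i \<noteq> 0 \<longrightarrow> c i \<in> X (2 - 1)" using a(1,2) by (simp add: c_def)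
  have H2: "\<forall>i j. i < j \<and> j \<le> 2 \<and> i \<noteq> 0 \<and> j \<noteq> 0 \<longrightarrow> d (2 - 1) i (c j) = d (2 - 1) (j - 1) (c i)"
  proof (intro allI impI)
    fix i j :: nat assume "i < j \<and> j \<le> 2 \<and> i \<noteq> 0 \<and> j \<noteq> 0"
    then have "i = 1 \<and> j = 2" using hh by blast
    then show "d (2 - 1) i (c j) = d (2 - 1) (j - 1) (c i)" using a(3) by (simp add: c_def)
  qed
  obtain x where x: "x \<in> X 2" "\<forall>i\<le>2. i \<noteq> 0 \<longrightarrow> d 2 i x = c i" using K H1 H2 by blast
  have "d 2 1 x = cp" "d 2 2 x = cq" using x(2)[rule_format, of 1] x(2)[rule_format, of 2] by (simp_all add: c_def)
  then show "\<exists>x\<in>X 2. d 2 1 x = cp \<and> d 2 2 x = cq" using x(1) by blast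
next
  fix c :: "nat \<Rightarrow> _"
  assume B: "\<forall>cp\<in>X (2 - 1). \<forall>cq\<in>X (2 - 1). d (2 - 1) 1 cq = d (2 - 1) (2 - 1) cp \<longrightarrow> (\<exists>x\<in>X 2. d 2 1 x = cp \<and> d 2 2 x = cq)"
    and a: "\<forall>i\<le>2. i \<noteq> 0 \<longrightarrow> c i \<in> X (2 - 1)"
    "\<forall>i j. i < j \<and> j \<le> 2 \<and> i \<noteq> 0 \<and> j \<noteq> 0 \<longrightarrow> d (2 - 1) i (c j) = d (2 - 1) (j - 1) (c i)"
  have "\<exists>x\<in>X 2. d 2 1 x = c 1 \<and> d 2 2 x = c 2"
    using B a(1)[rule_format, of 1] a(1)[rule_format, of 2] a(2)[rule_format, of 1 2] by auto
  then show "\<exists>x\<in>X 2. \<forall>i\<le>2. i \<noteq> 0 \<longrightarrow> d 2 i x = c i" by (auto simp: le2)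
qed

lemma kan12: "Kan_cond X d 1 2 \<longleftrightarrow> BC_cond X d 0 2 2"
  unfolding Kan_cond_def BC_cond_def
proof safe
  fix cp cq assume K: "\<forall>c. (\<forall>i\<le>2. i \<noteq> 1 \<longrightarrow> c i \<in> X (2 - 1)) \<and>
           (\<forall>i j. i < j \<and> j \<le> 2 \<and> i \<noteq> 1 \<and> j \<noteq> 1 \<longrightarrow> d (2 - 1) i (c j) = d (2 - 1) (j - 1) (c i)) \<longrightarrow>
           (\<exists>x\<in>X 2. \<forall>i\<le>2. i \<noteq> 1 \<longrightarrow> d 2 i x = c i)"
    and a: "cp \<in> X (2 - 1)" "cq \<in> X (2 - 1)" "d (2 - 1) 0 cq = d (2 - 1) (2 - 1) cp"
  have h: "\<And>i j::nat. i < j \<Longrightarrow> j \<le> 2 \<Longrightarrow> i \<noteq> 1 \<Longrightarrow> j \<noteq> 1 \<Longrightarrow> i = 0 \<and> j = 2" by auto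
  define c where "c = (\<lambda>i::nat. if i = 0 then cp else cq)"
  have hh: "\<And>i j::nat. i < j \<Longrightarrow> j \<le> 2 \<Longrightarrow> i \<noteq> 1 \<Longrightarrow> j \<noteq> 1 \<Longrightarrow> i = 0 \<and> j = 2" by auto
  have H1: "\<forall>i\<le>2. i \<noteq> 1 \<longrightarrow> c i \<in> X (2 - 1)" using a(1,2) by (simp add: c_def)
  have H2: "\<forall>i j. i < j \<and> j \<le> 2 \<and> i \<noteq> 1 \<and> j \<noteq> 1 \<longrightarrow> d (2 - 1) i (c j) = d (2 - 1) (j - 1) (c i)"
  proof (intro allI impI)
    fix i j :: nat assume "i < j \<and> j \<le> 2 \<and> i \<noteq> 1 \<and> j \<noteq> 1"
    then have "i = 0 \<and> j = 2" using hh by blast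
    then show "d (2 - 1) i (c j) = d (2 - 1) (j - 1) (c i)" using a(3) by (simp add: c_def)
  qed
  obtain x where x: "x \<in> X 2" "\<forall>i\<le>2. i \<noteq> 1 \<longrightarrow> d 2 i x = c i" using K H1 H2 by blast
  have "d 2 0 x = cp" "d 2 2 x = cq" using x(2)[rule_format, of 0] x(2)[rule_format, of 2] by (simp_all add: c_def)
  then show "\<exists>x\<in>X 2. d 2 0 x = cp \<and> d 2 2 x = cq" using x(1) by blast
next
  fix c :: "nat \<Rightarrow> _"
  assume B: "\<forall>cp\<in>X (2 - 1). \<forall>cq\<in>X (2 - 1). d (2 - 1) 0 cq = d (2 - 1) (2 - 1) cp \<longrightarrow> (\<exists>x\<in>X 2. d 2 0 x = cp \<and> d 2 2 x = cq)"
    and a: "\<forall>i\<le>2. i \<noteq> 1 \<longrightarrow> c i \<in> X (2 - 1)"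
    "\<forall>i j. i < j \<and> j \<le> 2 \<and> i \<noteq> 1 \<and> j \<noteq> 1 \<longrightarrow> d (2 - 1) i (c j) = d (2 - 1) (j - 1) (c i)"
  have "\<exists>x\<in>X 2. d 2 0 x = c 0 \<and> d 2 2 x = c 2"
    using B a[rule_format, of 0] a[rule_format, of 2] a(2)[rule_format, of 0 2] by auto
  then show "\<exists>x\<in>X 2. \<forall>i\<le>2. i \<noteq> 1 \<longrightarrow> d 2 i x = c i" by (auto simp: le2)
qed

lemma kan22: "Kan_cond X d 2 2 \<longleftrightarrow> BC_cond X d 0 1 2"
  unfolding Kan_cond_def BC_cond_def
proof safe
  fix cp cq assume K: "\<forall>c. (\<forall>i\<le>2. i \<noteq> 2 \<longrightarrow> c i \<in> X (2 - 1)) \<and>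
           (\<forall>i j. i < j \<and> j \<le> 2 \<and> i \<noteq> 2 \<and> j \<noteq> 2 \<longrightarrow> d (2 - 1) i (c j) = d (2 - 1) (j - 1) (c i)) \<longrightarrow>
           (\<exists>x\<in>X 2. \<forall>i\<le>2. i \<noteq> 2 \<longrightarrow> d 2 i x = c i)"
    and a: "cp \<in> X (2 - 1)" "cq \<in> X (2 - 1)" "d (2 - 1) 0 cq = d (2 - 1) (1 - 1) cp"
  have h: "\<And>i j::nat. i < j \<Longrightarrow> j \<le> 2 \<Longrightarrow> i \<noteq> 2 \<Longrightarrow> j \<noteq> 2 \<Longrightarrow> i = 0 \<and> j = 1" by auto
  define c where "c = (\<lambda>i::nat. if i = 0 then cp else cq)"
  have hh: "\<And>i j::nat. i < j \<Longrightarrow> j \<le> 2 \<Longrightarrow> i \<noteq> 2 \<Longrightarrow> j \<noteq> 2 \<Longrightarrow> i = 0 \<and> j = 1" by auto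
  have H1: "\<forall>i\<le>2. i \<noteq> 2 \<longrightarrow> c i \<in> X (2 - 1)" using a(1,2) by (simp add: c_def)
  have H2: "\<forall>i j. i < j \<and> j \<le> 2 \<and> i \<noteq> 2 \<and> j \<noteq> 2 \<longrightarrow> d (2 - 1) i (c j) = d (2 - 1) (j - 1) (c i)"
  proof (intro allI impI)
    fix i j :: nat assume "i < j \<and> j \<le> 2 \<and> i \<noteq> 2 \<and> j \<noteq> 2"
    then have "i = 0 \<and> j = 1" using hh by blast
    then show "d (2 - 1) i (c j) = d (2 - 1) (j - 1) (c i)" using a(3) by (simp add: c_def)
  qed
  obtain x where x: "x \<in> X 2" "\<forall>i\<le>2. i \<noteq> 2 \<longrightarrow> d 2 i x = c i" using K H1 H2 by blast
  have "d 2 0 x = cp" "d 2 1 x = cq" using x(2)[rule_format, of 0] x(2)[rule_format, of 1] by (simp_all add: c_def)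
  then show "\<exists>x\<in>X 2. d 2 0 x = cp \<and> d 2 1 x = cq" using x(1) by blast
next
  fix c :: "nat \<Rightarrow> _"
  assume B: "\<forall>cp\<in>X (2 - 1). \<forall>cq\<in>X (2 - 1). d (2 - 1) 0 cq = d (2 - 1) (1 - 1) cp \<longrightarrow> (\<exists>x\<in>X 2. d 2 0 x = cp \<and> d 2 1 x = cq)"
    and a: "\<forall>i\<le>2. i \<noteq> 2 \<longrightarrow> c i \<in> X (2 - 1)"
    "\<forall>i j. i < j \<and> j \<le> 2 \<and> i \<noteq> 2 \<and> j \<noteq> 2 \<longrightarrow> d (2 - 1) i (c j) = d (2 - 1) (j - 1) (c i)"
  have "\<exists>x\<in>X 2. d 2 0 x = c 0 \<and> d 2 1 x = c 1"
    using B a[rule_format, of 0] a[rule_format, of 1] a(2)[rule_format, of 0 1] by auto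
  then show "\<exists>x\<in>X 2. \<forall>i\<le>2. i \<noteq> 2 \<longrightarrow> d 2 i x = c i" by (auto simp: le2)
qed

theorem mainTheorem4:
  assumes "simplicial_set X d s"
  shows "(\<forall>n p. 1 \<le> n \<and> n \<le> 2 \<and> p \<le> n \<longrightarrow> Kan_cond X d p n) \<longleftrightarrow>
         (\<forall>n p q. 1 < n \<and> n \<le> 2 \<and> p < q \<and> q \<le> n \<longrightarrow> BC_cond X d p q n)"
proof
  assume K: "\<forall>n p. 1 \<le> n \<and> n \<le> 2 \<and> p \<le> n \<longrightarrow> Kan_cond X d p n"
  show "\<forall>n p q. 1 < n \<and> n \<le> 2 \<and> p < q \<and> q \<le> n \<longrightarrow> BC_cond X d p q n"
  proof (intro allI impI)
    fix n p q :: nat assume h: "1 < n \<and> n \<le> 2 \<and> p < q \<and> q \<le> n"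
    then have "n = 2" "(p = 0 \<and> q = 1) \<or> (p = 0 \<and> q = 2) \<or> (p = 1 \<and> q = 2)" by auto
    then show "BC_cond X d p q n"
      using K[rule_format, of 2 0] K[rule_format, of 2 1] K[rule_format, of 2 2] kan02[of X d] kan12[of X d] kan22[of X d]
      by auto
  qed
next
  assume B: "\<forall>n p q. 1 < n \<and> n \<le> 2 \<and> p < q \<and> q \<le> n \<longrightarrow> BC_cond X d p q n"
  show "\<forall>n p. 1 \<le> n \<and> n \<le> 2 \<and> p \<le> n \<longrightarrow> Kan_cond X d p n"
  proof (intro allI impI)
    fix n p :: nat assume h: "1 \<le> n \<and> n \<le> 2 \<and> p \<le> n"
    then have "(n = 1 \<and> p = 0) \<or> (n = 1 \<and> p = 1) \<or> (n = 2 \<and> p = 0) \<or> (n = 2 \<and> p = 1) \<or> (n = 2 \<and> p = 2)" by auto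
    then show "Kan_cond X d p n"
      using B[rule_format, of 2 0 1] B[rule_format, of 2 0 2] B[rule_format, of 2 1 2]
        kan01[OF assms] kan11[OF assms] kan02[of X d] kan12[of X d] kan22[of X d]
      by auto
  qed
qed

end
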